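(* Let $T$ be a p-string of length $n$. Suppose a node $v$ of $\mathrm{PPH}(T)$ has a reversed suffix link $\mathrm{rslink}(a,v)$ with $a\in\Sigma\cup\{0,\ldots,n-1\}$, and let $u$ be any ancestor of $v$. Then: - if $a\in\Sigma\cup\{0\}$, then $\mathrm{rslink}(a,u)$ is defined; - if $a\in\{1,\ldots,n-1\}$ and $|u|\ge a$, then $\mathrm{rslink}(a,u)$ is defined; - if $a\in\{1,\ldots,n-1\}$ and $|u|<a$, then $\mathrm{rslink}(0,u)$ is defined.
   Context: Let $\Sigma$ and $\Pi$ be disjoint alphabets. A p-string is a finite string over $\Sigma\cup\Pi$. For a string $S$, $S[i]$ is its $i$-th character, $S[i..j]$ is the substring from position $i$ to $j$ (empty if $j<i$), and $S[i..]=S[i..|S|]$. The previous encoding $\mathrm{prev}(S)$ of a p-string $S$ of length $n$ is the sequence of length $n$ defined by: - $\mathrm{prev}(S)[i]=S[i]$ if $S[i]\in\Sigma$; - $\mathrm{prev}(S)[i]=0$ if $S[i]\in\Pi$ does not occur in $S[1..i-1]$; - $\mathrm{prev}(S)[i]=i-j$ otherwise, where $j<i$ is the largest position with $S[j]=S[i]$. Sequence hash tree. Let $\langle S_1,\ldots,S_k\rangle$ be a sequence of strings with $S_1=\varepsilon$ and with $S_i$ not a prefix of $S_j$ for any $j<i$. Its sequence hash tree is built as follows. Start from a root representing $\varepsilon$. For $i=2,\ldots,k$, insert as a new node the shortest prefix $p_i$ of $S_i$ that is not yet a node. Attach it as a child of the longest prefix $q_i$ of $S_i$ that is already a node, via an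 edge labeled $S_i[|q_i|+1]$. The parameterized position heap $\mathrm{PPH}(T)$ is the sequence hash tree of $\langle\varepsilon,\mathrm{prev}(T[n..]),\ldots,\mathrm{prev}(T[1..])\rangle$. Each node is identified with the string of edge labels on the path from the root to it, and $|v|$ denotes its length. A string is represented by $\mathrm{PPH}(T)$ if it is spelled by a path from the root. Reversed suffix links. For a node $v$ and $a\in\Sigma\cup\{0,\ldots,n-1\}$, $\mathrm{rslink}(a,v)$ is defined as follows: - if $a\in\Sigma\cup\{0\}$ and $av$ is represented by $\mathrm{PPH}(T)$, then $\mathrm{rslink}(a,v)=av$; - if $a\in\{1,\ldots,n-1\}$, $v[a]=0$, and $0\,v[1..a-1]\,a\,v[a+1..|v|]$ is represented by $\mathrm{PPH}(T)$, then $\mathrm{rslink}(a,v)$ is that node; - otherwise $\mathrm{rslink}(a,v)$ is undefined. *)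

theory Defs
  imports Main "HOL-Library.Sublist"
begin

text \<open>P-strings: characters are Inl c (c in Sigma, static) or Inr p (p in Pi,
  parameter); the sum type makes Sigma and Pi disjoint. Strings are lists,
  indexed from 0 internally (paper position i is list index i-1).\<close>

type_synonym ('s, 'p) pstring = "('s + 'p) list"

datatype 's pc = Ch 's | Num nat

definition prev :: "('s, 'p) pstring \<Rightarrow> 's pc list" where
  "prev S = map (\<lambda>i. case S ! i of
        Inl c \<Rightarrow> Ch c
      | Inr p \<Rightarrow> (if Inr p \<in> set (take i S)
                 then Num (i - (GREATEST j. j < i \<and> S ! j = Inr p))
                 else Num 0)) [0..<length S]"

text \<open>Nodes are identified with the strings they spell;
  the constructed node set is prefix-closed and the parent of a node is its
  longest proper prefix, so the tree is determined by its node set.\<close>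

definition sht_insert :: "'a list set \<Rightarrow> 'a list \<Rightarrow> 'a list set" where
  "sht_insert N s = insert (take (LEAST k. take k s \<notin> N) s) N"

definition sht_nodes :: "'a list list \<Rightarrow> 'a list set" where
  "sht_nodes Ss = foldl sht_insert {[]} (tl Ss)"

definition pph :: "('s, 'p) pstring \<Rightarrow> 's pc list set" where
  "pph T = sht_nodes ([] # map (\<lambda>i. prev (drop i T)) (rev [0..<length T]))"

definition rslink :: "('s, 'p) pstring \<Rightarrow> 's pc \<Rightarrow> 's pc list \<Rightarrow> 's pc list option" where
  "rslink T a v = (case a of
      Ch c \<Rightarrow> (if Ch c # v \<in> pph T then Some (Ch c # v) else None)
    | Num k \<Rightarrow>
        (if k = 0 then (if Num 0 # v \<in> pph T then Some (Num 0 # v) else None)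
         else if k < length T \<and> k \<le> length v \<and> v ! (k - 1) = Num 0
                 \<and> Num 0 # take (k - 1) v @ Num k # drop k v \<in> pph T
              then Some (Num 0 # take (k - 1) v @ Num k # drop k v)
              else None))"

end

theory Submission
  imports Defs
begin

definition pclosed :: "'a list set \<Rightarrow> bool" where
  "pclosed N = (\<forall>x\<in>N. \<forall>j. take j x \<in> N)"

lemma pclosed_insert:
  assumes "pclosed N" "[] \<in> N"
  shows "pclosed (sht_insert N s)"
proof (cases "\<exists>k. take k s \<notin> N")
  case False
  then have "sht_insert N s = N" unfolding sht_insert_def by auto
  then show ?thesis using assms by simp
next
  case True
  define m where "m = (LEAST k. take k s \<notin> N)"
  have lt: "j < m \<Longrightarrow> take j s \<in> N" for j
    using not_less_Least m_def by blast
  have "take j (take m s) \<in> N \<or> take j (take m s) = take m s" for j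
  proof (cases "j < m")
    case True then show ?thesis using lt by (simp add: min_def)
  next
    case False then show ?thesis by (simp add: min_def)
  qed
  then show ?thesis using assms unfolding pclosed_def sht_insert_def m_def[symmetric]
    by auto
qed

lemma pclosed_foldl:
  assumes "pclosed N" "[] \<in> N"
  shows "pclosed (foldl sht_insert N xs) \<and> [] \<in> foldl sht_insert N xs"
  using assms
proof (induction xs arbitrary: N)
  case Nil then show ?case by simp
next
  case (Cons a xs)
  have "pclosed (sht_insert N a)" "[] \<in> sht_insert N a"
    using pclosed_insert Cons.prems by (auto simp: sht_insert_def)
  then show ?case using Cons.IH by simp
qed

lemma pph_pclosed: "pclosed (pph T)"
proof -
  have "pclosed {[]::'s pc list}" unfolding pclosed_def by simp
  then show ?thesis unfolding pph_def sht_nodes_def using pclosed_foldl by blast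
qed

lemma pph_prefix: "x \<in> pph T \<Longrightarrow> prefix y x \<Longrightarrow> y \<in> pph T"
  using pph_pclosed[of T] unfolding pclosed_def
  by (metis prefix_def append_eq_conv_conj)

theorem proposition1:
  fixes T :: "('s, 'p) pstring" and a :: "'s pc" and u v :: "'s pc list"
  assumes "v \<in> pph T"
    and "a \<in> range Ch \<union> Num ` {0..<length T}"
    and "rslink T a v \<noteq> None"
    and "u \<in> pph T" and "prefix u v"
  shows "(a \<in> range Ch \<union> {Num 0} \<longrightarrow> rslink T a u \<noteq> None)
    \<and> (\<forall>k. a = Num k \<and> 1 \<le> k \<and> k < length T \<and> k \<le> length u \<longrightarrow> rslink T a u \<noteq> None)
    \<and> (\<forall>k. a = Num k \<and> 1 \<le> k \<and> k < length T \<and> length u < k \<longrightarrow> rslink T (Num 0) u \<noteq> None)"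
proof (intro conjI allI impI)
  obtain w where uv: "v = u @ w" using assms(5) prefix_def by blast
  {
    assume "a \<in> range Ch \<union> {Num 0}"
    then obtain b where ab: "a = b" "b \<in> range Ch \<union> {Num 0}" by blast
    have "b # v \<in> pph T" using assms(3) ab
      by (auto simp: rslink_def split: if_splits)
    then have "b # u \<in> pph T" using pph_prefix[of "b # v" T "b # u"] uv by simp
    then show "rslink T a u \<noteq> None" using ab by (auto simp: rslink_def)
  }
  fix k
  {
    assume h: "a = Num k \<and> 1 \<le> k \<and> k < length T \<and> k \<le> length u"
    then have hk: "a = Num k" "1 \<le> k" "k < length T" "k \<le> length u" by auto
    then have c: "k \<le> length v \<and> v ! (k - 1) = Num 0
                 \<and> Num 0 # take (k - 1) v @ Num k # drop k v \<in> pph T"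
      using assms(3) by (auto simp: rslink_def split: if_splits)
    have e1: "take (k-1) v = take (k-1) u" using uv hk by simp
    have kl: "k - 1 < length u" using hk by linarith
    have e2: "v ! (k-1) = u ! (k-1)" unfolding uv using kl by (rule nth_append_left)
    have e3: "drop k v = drop k u @ w" using uv hk by simp
    have "Num 0 # take (k - 1) v @ Num k # drop k v
          = (Num 0 # take (k - 1) u @ Num k # drop k u) @ w" using e1 e3 by simp
    then have "prefix (Num 0 # take (k - 1) u @ Num k # drop k u)
                 (Num 0 # take (k - 1) v @ Num k # drop k v)"
      by (metis prefixI)
    then have m: "Num 0 # take (k - 1) u @ Num k # drop k u \<in> pph T"
      using c pph_prefix by blast
    have "k \<noteq> 0" using hk by simp
    then show "rslink T a u \<noteq> None" unfolding rslink_def using hk c e2 m by simp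
  }
  {
    assume h: "a = Num k \<and> 1 \<le> k \<and> k < length T \<and> length u < k"
    then have hk: "a = Num k" "1 \<le> k" "k < length T" "length u < k" by auto
    then have c: "Num 0 # take (k - 1) v @ Num k # drop k v \<in> pph T"
      using assms(3) by (auto simp: rslink_def split: if_splits)
    have "take (k-1) v = u @ take (k - 1 - length u) w" using uv hk by simp
    then have "Num 0 # take (k - 1) v @ Num k # drop k v
       = (Num 0 # u) @ (take (k - 1 - length u) w @ Num k # drop k v)" by simp
    then have "prefix (Num 0 # u) (Num 0 # take (k - 1) v @ Num k # drop k v)"
      by (metis prefixI)
    then have "Num 0 # u \<in> pph T" using c pph_prefix by blast
    then show "rslink T (Num 0) u \<noteq> None" by (simp add: rslink_def)
  }
qed

end
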